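(* Let $\mathcal{N}$ be a finite factor with faithful normal tracial state $\tau_{\mathcal{N}}$, $n\in\mathbb{N}$, $\mathbb{M}_n=\mathrm{Mat}_n(\mathbb{C})$, $\mathcal{M}=\mathbb{M}_n\otimes\mathcal{N}\cong\mathrm{Mat}_n(\mathcal{N})$ with tracial state $\tau_{\mathcal{M}}=\frac1n\mathrm{Tr}\otimes\tau_{\mathcal{N}}$. Let $\mathcal{U}_n^{per}\subseteq\mathbb{M}_n$ be the group of permutation matrices and $\mathbb{D}_n\subseteq\mathbb{M}_n$ the diagonal matrices. If $a\in\mathbb{D}_n\otimes\mathbf{1}_{\mathcal{N}}$, then $$\sup_{u\in\mathcal{U}(\mathcal{M})}\|a-u^*au\|_2=\max_{u\in\mathcal{U}_n^{per}\otimes\mathbf{1}_{\mathcal{N}}}\|a-u^*au\|_2.$$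
   Context: $\|x\|_2=\tau_{\mathcal{M}}(x^*x)^{1/2}$; $\mathcal{U}(\mathcal{M})$ is the unitary group of $\mathcal{M}$. The identification $\mathrm{Mat}_n(\mathcal{N})\to\mathbb{M}_n\otimes\mathcal{N}$ is $(a_{ij})\mapsto\sum_{i,j}\alpha_{ij}\otimes a_{ij}$ with $\alpha_{ij}$ the matrix units. *)

theory Defs
  imports "HOL-Analysis.Analysis"
begin

record 'a salg =
  acar  :: "'a set"
  azero :: 'a
  aone  :: 'a
  aadd  :: "'a \<Rightarrow> 'a \<Rightarrow> 'a"
  amul  :: "'a \<Rightarrow> 'a \<Rightarrow> 'a"
  asc   :: "complex \<Rightarrow> 'a \<Rightarrow> 'a"
  astar :: "'a \<Rightarrow> 'a"
  anorm :: "'a \<Rightarrow> real"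

definition asub :: "'a salg \<Rightarrow> 'a \<Rightarrow> 'a \<Rightarrow> 'a" where
  "asub A x y = aadd A x (asc A (-1) y)"

definition star_algebra :: "'a salg \<Rightarrow> bool" where
  "star_algebra A \<longleftrightarrow>
     azero A \<in> acar A \<and> aone A \<in> acar A \<and> aone A \<noteq> azero A \<and>
     (\<forall>x\<in>acar A. \<forall>y\<in>acar A. aadd A x y \<in> acar A \<and> amul A x y \<in> acar A) \<and>
     (\<forall>c. \<forall>x\<in>acar A. asc A c x \<in> acar A) \<and>
     (\<forall>x\<in>acar A. astar A x \<in> acar A) \<and>
     (\<forall>x\<in>acar A. \<forall>y\<in>acar A. \<forall>z\<in>acar A. aadd A (aadd A x y) z = aadd A x (aadd A y z)) \<and>
     (\<forall>x\<in>acar A. \<forall>y\<in>acar A. aadd A x y = aadd A y x) \<and>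
     (\<forall>x\<in>acar A. aadd A x (azero A) = x) \<and>
     (\<forall>x\<in>acar A. aadd A x (asc A (-1) x) = azero A) \<and>
     (\<forall>x\<in>acar A. asc A 1 x = x) \<and>
     (\<forall>a b. \<forall>x\<in>acar A. asc A a (asc A b x) = asc A (a * b) x) \<and>
     (\<forall>a b. \<forall>x\<in>acar A. asc A (a + b) x = aadd A (asc A a x) (asc A b x)) \<and>
     (\<forall>a. \<forall>x\<in>acar A. \<forall>y\<in>acar A. asc A a (aadd A x y) = aadd A (asc A a x) (asc A a y)) \<and>
     (\<forall>x\<in>acar A. \<forall>y\<in>acar A. \<forall>z\<in>acar A. amul A (amul A x y) z = amul A x (amul A y z)) \<and>
     (\<forall>x\<in>acar A. amul A (aone A) x = x \<and> amul A x (aone A) = x) \<and>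
     (\<forall>x\<in>acar A. \<forall>y\<in>acar A. \<forall>z\<in>acar A.
        amul A x (aadd A y z) = aadd A (amul A x y) (amul A x z) \<and>
        amul A (aadd A x y) z = aadd A (amul A x z) (amul A y z)) \<and>
     (\<forall>a. \<forall>x\<in>acar A. \<forall>y\<in>acar A.
        amul A (asc A a x) y = asc A a (amul A x y) \<and> amul A x (asc A a y) = asc A a (amul A x y)) \<and>
     (\<forall>x\<in>acar A. astar A (astar A x) = x) \<and>
     (\<forall>x\<in>acar A. \<forall>y\<in>acar A. astar A (aadd A x y) = aadd A (astar A x) (astar A y)) \<and>
     (\<forall>a. \<forall>x\<in>acar A. astar A (asc A a x) = asc A (cnj a) (astar A x)) \<and>
     (\<forall>x\<in>acar A. \<forall>y\<in>acar A. astar A (amul A x y) = amul A (astar A y) (astar A x))"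

definition cstar_algebra :: "'a salg \<Rightarrow> bool" where
  "cstar_algebra A \<longleftrightarrow> star_algebra A \<and>
     (\<forall>x\<in>acar A. anorm A x \<ge> 0 \<and> (anorm A x = 0 \<longleftrightarrow> x = azero A)) \<and>
     (\<forall>x\<in>acar A. \<forall>y\<in>acar A. anorm A (aadd A x y) \<le> anorm A x + anorm A y) \<and>
     (\<forall>c. \<forall>x\<in>acar A. anorm A (asc A c x) = cmod c * anorm A x) \<and>
     (\<forall>x\<in>acar A. \<forall>y\<in>acar A. anorm A (amul A x y) \<le> anorm A x * anorm A y) \<and>
     (\<forall>x\<in>acar A. anorm A (amul A (astar A x) x) = (anorm A x)\<^sup>2) \<and>
     (\<forall>X. (\<forall>k. X k \<in> acar A) \<and>
          (\<forall>e>0. \<exists>N. \<forall>m\<ge>N. \<forall>k\<ge>N. anorm A (asub A (X m) (X k)) < e) \<longrightarrow>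
          (\<exists>x\<in>acar A. (\<lambda>k. anorm A (asub A (X k) x)) \<longlonglongrightarrow> 0))"

section \<open>Continuous dual and W*-algebras (Sakai: C*-algebras that are dual Banach spaces)\<close>

definition bdd_lin_functional :: "'a salg \<Rightarrow> ('a \<Rightarrow> complex) \<Rightarrow> bool" where
  "bdd_lin_functional A f \<longleftrightarrow>
     (\<forall>x\<in>acar A. \<forall>y\<in>acar A. f (aadd A x y) = f x + f y) \<and>
     (\<forall>c. \<forall>x\<in>acar A. f (asc A c x) = c * f x) \<and>
     (\<forall>x. x \<notin> acar A \<longrightarrow> f x = 0) \<and>
     (\<exists>C. \<forall>x\<in>acar A. cmod (f x) \<le> C * anorm A x)"

definition fnorm :: "'a salg \<Rightarrow> ('a \<Rightarrow> complex) \<Rightarrow> real" where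
  "fnorm A f = Sup ((\<lambda>x. cmod (f x)) ` {x \<in> acar A. anorm A x \<le> 1})"

text \<open>F is (an isometric copy inside the dual A* of) a predual of A:
  F is a norm-closed subspace of A*, and the canonical map a \<mapsto> (f \<mapsto> f a)
  is an isometry of A onto the Banach dual F*.\<close>
definition predual :: "'a salg \<Rightarrow> ('a \<Rightarrow> complex) set \<Rightarrow> bool" where
  "predual A F \<longleftrightarrow>
     (\<forall>f\<in>F. bdd_lin_functional A f) \<and>
     (\<forall>f\<in>F. \<forall>g\<in>F. (\<lambda>x. f x + g x) \<in> F) \<and>
     (\<forall>c. \<forall>f\<in>F. (\<lambda>x. c * f x) \<in> F) \<and>
     (\<forall>g fs. bdd_lin_functional A g \<and> (\<forall>k. fs k \<in> F) \<and>
          (\<lambda>k. fnorm A (\<lambda>x. fs k x - g x)) \<longlonglongrightarrow> 0 \<longrightarrow> g \<in> F) \<and>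
     (\<forall>a\<in>acar A. anorm A a = Sup ((\<lambda>f. cmod (f a)) ` {f \<in> F. fnorm A f \<le> 1})) \<and>
     (\<forall>\<phi> :: ('a \<Rightarrow> complex) \<Rightarrow> complex.
        (\<forall>f\<in>F. \<forall>g\<in>F. \<phi> (\<lambda>x. f x + g x) = \<phi> f + \<phi> g) \<and>
        (\<forall>c. \<forall>f\<in>F. \<phi> (\<lambda>x. c * f x) = c * \<phi> f) \<and>
        (\<exists>C. \<forall>f\<in>F. cmod (\<phi> f) \<le> C * fnorm A f) \<longrightarrow>
        (\<exists>a\<in>acar A. \<forall>f\<in>F. \<phi> f = f a))"

definition wstar_algebra :: "'a salg \<Rightarrow> bool" where
  "wstar_algebra A \<longleftrightarrow> cstar_algebra A \<and> (\<exists>F. predual A F)"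

text \<open>Normal functionals on a W*-algebra = elements of the (unique) predual.\<close>
definition normal_functional :: "'a salg \<Rightarrow> ('a \<Rightarrow> complex) \<Rightarrow> bool" where
  "normal_functional A f \<longleftrightarrow> (\<exists>F. predual A F \<and> f \<in> F)"

definition factor :: "'a salg \<Rightarrow> bool" where
  "factor A \<longleftrightarrow> wstar_algebra A \<and>
     (\<forall>z\<in>acar A. (\<forall>x\<in>acar A. amul A z x = amul A x z) \<longrightarrow> (\<exists>c. z = asc A c (aone A)))"

definition faithful_normal_tracial_state :: "'a salg \<Rightarrow> ('a \<Rightarrow> complex) \<Rightarrow> bool" where
  "faithful_normal_tracial_state A tau \<longleftrightarrow>
     bdd_lin_functional A tau \<and>
     (\<forall>x\<in>acar A. Im (tau (amul A (astar A x) x)) = 0 \<and> Re (tau (amul A (astar A x) x)) \<ge> 0) \<and>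
     tau (aone A) = 1 \<and>
     (\<forall>x\<in>acar A. \<forall>y\<in>acar A. tau (amul A x y) = tau (amul A y x)) \<and>
     (\<forall>x\<in>acar A. tau (amul A (astar A x) x) = 0 \<longrightarrow> x = azero A) \<and>
     normal_functional A tau"

definition finite_factor_with_trace :: "'a salg \<Rightarrow> ('a \<Rightarrow> complex) \<Rightarrow> bool" where
  "finite_factor_with_trace A tau \<longleftrightarrow> factor A \<and> faithful_normal_tracial_state A tau"

section \<open>n x n matrices over A, i.e. M_n \<otimes> N = Mat_n(N)\<close>

primrec asum :: "'a salg \<Rightarrow> (nat \<Rightarrow> 'a) \<Rightarrow> nat \<Rightarrow> 'a" where
  "asum A f 0 = azero A"
| "asum A f (Suc k) = aadd A (asum A f k) (f k)"

definition mats :: "'a salg \<Rightarrow> nat \<Rightarrow> (nat \<Rightarrow> nat \<Rightarrow> 'a) set" where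
  "mats A n = {x. \<forall>i j. if i < n \<and> j < n then x i j \<in> acar A else x i j = azero A}"

definition mmul :: "'a salg \<Rightarrow> nat \<Rightarrow> (nat \<Rightarrow> nat \<Rightarrow> 'a) \<Rightarrow> (nat \<Rightarrow> nat \<Rightarrow> 'a) \<Rightarrow> (nat \<Rightarrow> nat \<Rightarrow> 'a)" where
  "mmul A n x y = (\<lambda>i j. if i < n \<and> j < n then asum A (\<lambda>k. amul A (x i k) (y k j)) n else azero A)"

definition madj :: "'a salg \<Rightarrow> nat \<Rightarrow> (nat \<Rightarrow> nat \<Rightarrow> 'a) \<Rightarrow> (nat \<Rightarrow> nat \<Rightarrow> 'a)" where
  "madj A n x = (\<lambda>i j. if i < n \<and> j < n then astar A (x j i) else azero A)"

definition msub :: "'a salg \<Rightarrow> nat \<Rightarrow> (nat \<Rightarrow> nat \<Rightarrow> 'a) \<Rightarrow> (nat \<Rightarrow> nat \<Rightarrow> 'a) \<Rightarrow> (nat \<Rightarrow> nat \<Rightarrow> 'a)" where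
  "msub A n x y = (\<lambda>i j. if i < n \<and> j < n then asub A (x i j) (y i j) else azero A)"

definition mone :: "'a salg \<Rightarrow> nat \<Rightarrow> (nat \<Rightarrow> nat \<Rightarrow> 'a)" where
  "mone A n = (\<lambda>i j. if i < n \<and> j < n \<and> i = j then aone A else azero A)"

definition munitaries :: "'a salg \<Rightarrow> nat \<Rightarrow> (nat \<Rightarrow> nat \<Rightarrow> 'a) set" where
  "munitaries A n = {u \<in> mats A n. mmul A n (madj A n u) u = mone A n \<and> mmul A n u (madj A n u) = mone A n}"

definition mtau :: "('a \<Rightarrow> complex) \<Rightarrow> nat \<Rightarrow> (nat \<Rightarrow> nat \<Rightarrow> 'a) \<Rightarrow> complex" where
  "mtau tau n x = (1 / of_nat n) * (\<Sum>i<n. tau (x i i))"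

definition mnorm2 :: "'a salg \<Rightarrow> ('a \<Rightarrow> complex) \<Rightarrow> nat \<Rightarrow> (nat \<Rightarrow> nat \<Rightarrow> 'a) \<Rightarrow> real" where
  "mnorm2 A tau n x = sqrt (Re (mtau tau n (mmul A n (madj A n x) x)))"

definition diag_tensor_one :: "'a salg \<Rightarrow> nat \<Rightarrow> (nat \<Rightarrow> complex) \<Rightarrow> (nat \<Rightarrow> nat \<Rightarrow> 'a)" where
  "diag_tensor_one A n lam = (\<lambda>i j. if i < n \<and> j < n \<and> i = j then asc A (lam i) (aone A) else azero A)"

definition perm_tensor_one :: "'a salg \<Rightarrow> nat \<Rightarrow> (nat \<Rightarrow> nat) \<Rightarrow> (nat \<Rightarrow> nat \<Rightarrow> 'a)" where
  "perm_tensor_one A n \<sigma> = (\<lambda>i j. if i < n \<and> j < n \<and> j = \<sigma> i then aone A else azero A)"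

definition comm_dist :: "'a salg \<Rightarrow> ('a \<Rightarrow> complex) \<Rightarrow> nat \<Rightarrow> (nat \<Rightarrow> nat \<Rightarrow> 'a) \<Rightarrow> (nat \<Rightarrow> nat \<Rightarrow> 'a) \<Rightarrow> real" where
  "comm_dist A tau n a u = mnorm2 A tau n (msub A n a (mmul A n (madj A n u) (mmul A n a u)))"

end

theory Submission
  imports Defs
begin

lemma hall:
  fixes A :: "'i \<Rightarrow> 'b set"
  assumes "finite I" "\<forall>i\<in>I. finite (A i)" "\<forall>S\<subseteq>I. card S \<le> card (\<Union>(A ` S))"
  shows "\<exists>f. inj_on f I \<and> (\<forall>i\<in>I. f i \<in> A i)"
  using assms
proof (induction "card I" arbitrary: I A rule: less_induct)
  case less
  show ?case
  proof (cases "I = {}")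
    case True then show ?thesis by auto
  next
    case False
    show ?thesis
    proof (cases "\<exists>S. S \<subseteq> I \<and> S \<noteq> {} \<and> S \<noteq> I \<and> card (\<Union>(A ` S)) = card S")
      case True
      then obtain S where S: "S \<subseteq> I" "S \<noteq> {}" "S \<noteq> I" "card (\<Union>(A ` S)) = card S" by blast
      have fS: "finite S" using less.prems(1) S(1) finite_subset by blast
      have cS: "card S < card I" using psubset_card_mono[of I S] S less.prems(1) by blast
      have "\<exists>f. inj_on f S \<and> (\<forall>i\<in>S. f i \<in> A i)"
        by (rule less.hyps[OF cS fS]) (use less.prems S(1) in auto)
      then obtain f1 where f1: "inj_on f1 S" "\<forall>i\<in>S. f1 i \<in> A i" by blast
      define B where "B i = A i - \<Union>(A ` S)" for i
      have cIS: "card (I - S) < card I"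
        proof -
        have "card (I - S) = card I - card S" using fS S(1) by (rule card_Diff_subset)
        moreover have "card S > 0" using fS S(2) by (simp add: card_gt_0_iff)
        moreover have "card S \<le> card I" using S(1) less.prems(1) by (rule card_mono[rotated])
        ultimately show ?thesis by linarith
      qed
      have finU: "finite (\<Union>(A ` T))" if "T \<subseteq> I" for T
        using that less.prems(1,2) by (meson finite_UN_I finite_subset subsetD)
      have "\<exists>f. inj_on f (I - S) \<and> (\<forall>i\<in>I - S. f i \<in> B i)"
      proof (rule less.hyps[OF cIS])
        show "finite (I - S)" using less.prems(1) by simp
        show "\<forall>i\<in>I - S. finite (B i)" using less.prems(2) by (simp add: B_def)
        show "\<forall>T\<subseteq>I - S. card T \<le> card (\<Union> (B ` T))"
        proof (intro allI impI)
          fix T assume T: "T \<subseteq> I - S"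
          have TS: "T \<union> S \<subseteq> I" using T S(1) by blast
          have fT: "finite T" using T less.prems(1) finite_subset by blast
          have e: "\<Union> (B ` T) = \<Union>(A ` (T \<union> S)) - \<Union>(A ` S)" by (auto simp: B_def)
          have "card (\<Union> (B ` T)) = card (\<Union>(A ` (T \<union> S))) - card (\<Union>(A ` S))"
            unfolding e by (rule card_Diff_subset) (use finU S(1) in auto)
          moreover have "card (T \<union> S) \<le> card (\<Union>(A ` (T \<union> S)))" using less.prems(3) TS by blast
          moreover have "card (T \<union> S) = card T + card S"
            using T fT fS by (intro card_Un_disjoint) auto
          ultimately show "card T \<le> card (\<Union> (B ` T))" using S(4) by linarith
        qed
      qed
      then obtain f2 where f2: "inj_on f2 (I - S)" "\<forall>i\<in>I - S. f2 i \<in> B i" by blast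
      define f where "f i = (if i \<in> S then f1 i else f2 i)" for i
      have "inj_on f I"
      proof (rule inj_onI)
        fix x y assume xy: "x \<in> I" "y \<in> I" "f x = f y"
        show "x = y"
        proof (cases "x \<in> S"; cases "y \<in> S")
          assume "x \<in> S" "y \<in> S" then show ?thesis using xy f1(1) by (auto simp: f_def inj_on_def)
        next
          assume "x \<notin> S" "y \<notin> S" then show ?thesis using xy f2(1) by (auto simp: f_def inj_on_def)
        next
          assume a: "x \<in> S" "y \<notin> S"
          then have "f x \<in> \<Union>(A ` S)" "f y \<notin> \<Union>(A ` S)" using f1(2) f2(2) xy(2)
            by (auto simp: f_def B_def)
          then show ?thesis using xy(3) by simp
        next
          assume a: "x \<notin> S" "y \<in> S"
          then have "f y \<in> \<Union>(A ` S)" "f x \<notin> \<Union>(A ` S)" using f1(2) f2(2) xy(1)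
            by (auto simp: f_def B_def)
          then show ?thesis using xy(3) by simp
        qed
      qed
      moreover have "\<forall>i\<in>I. f i \<in> A i" using f1(2) f2(2) by (auto simp: f_def B_def)
      ultimately show ?thesis by blast
    next
      case False
      then have strict: "card S < card (\<Union>(A ` S))" if "S \<subseteq> I" "S \<noteq> {}" "S \<noteq> I" for S
        using that less.prems(3) le_neq_implies_less by metis
      obtain i0 where i0: "i0 \<in> I" using \<open>I \<noteq> {}\<close> by blast
      have "card {i0} \<le> card (A i0)" using less.prems(3) i0 by (metis ccpo_Sup_singleton image_empty image_insert empty_subsetI insert_subset)
      then have "A i0 \<noteq> {}" by auto
      then obtain x where x: "x \<in> A i0" by blast
      define B where "B i = A i - {x}" for i
      have cI: "card (I - {i0}) < card I" using i0 less.prems(1) card_gt_0_iff[of I] by auto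
      have "\<exists>f. inj_on f (I - {i0}) \<and> (\<forall>i\<in>I - {i0}. f i \<in> B i)"
      proof (rule less.hyps[OF cI])
        show "finite (I - {i0})" using less.prems(1) by simp
        show "\<forall>i\<in>I - {i0}. finite (B i)" using less.prems(2) by (simp add: B_def)
        show "\<forall>T\<subseteq>I - {i0}. card T \<le> card (\<Union> (B ` T))"
        proof (intro allI impI)
          fix T assume T: "T \<subseteq> I - {i0}"
          show "card T \<le> card (\<Union> (B ` T))"
          proof (cases "T = {}")
            case True then show ?thesis by simp
          next
            case False
            have "T \<noteq> I" using T i0 by blast
            then have lt: "card T < card (\<Union>(A ` T))" using strict[of T] T False by blast
            have e: "\<Union> (B ` T) = \<Union>(A ` T) - {x}" by (auto simp: B_def)
            have "card (\<Union>(A ` T)) - 1 \<le> card (\<Union>(A ` T) - {x})"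
              by (simp add: card_Diff_singleton_if)
            then show ?thesis unfolding e using lt by linarith
          qed
        qed
      qed
      then obtain f2 where f2: "inj_on f2 (I - {i0})" "\<forall>i\<in>I - {i0}. f2 i \<in> B i" by blast
      define f where "f = f2(i0 := x)"
      have "inj_on f (I - {i0})" using f2(1) by (auto simp: f_def inj_on_def)
      moreover have "f i0 \<notin> f ` (I - {i0})" using f2(2) by (auto simp: f_def B_def)
      ultimately have "inj_on f (insert i0 (I - {i0}))" using inj_on_insert[of f i0 "I - {i0}"] by blast
      moreover have "insert i0 (I - {i0}) = I" using i0 by blast
      moreover have "\<forall>i\<in>I. f i \<in> A i" using f2(2) x by (auto simp: f_def B_def)
      ultimately show ?thesis by metis
    qed
  qed
qed

lemma ds_exists_perm:
  fixes p :: "nat \<Rightarrow> nat \<Rightarrow> real" and c :: real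
  assumes pos: "\<forall>i<n. \<forall>j<n. p i j \<ge> 0" and c0: "c > 0"
    and rows: "\<forall>i<n. (\<Sum>j<n. p i j) = c" and cols: "\<forall>j<n. (\<Sum>i<n. p i j) = c"
  shows "\<exists>\<sigma>. \<sigma> permutes {..<n} \<and> (\<forall>i<n. p i (\<sigma> i) > 0)"
proof -
  define B where "B i = {j. j < n \<and> p i j > 0}" for i
  have "\<exists>f. inj_on f {..<n} \<and> (\<forall>i\<in>{..<n}. f i \<in> B i)"
  proof (rule hall)
    show "finite {..<n}" by simp
    show "\<forall>i\<in>{..<n}. finite (B i)" by (simp add: B_def)
    show "\<forall>S\<subseteq>{..<n}. card S \<le> card (\<Union> (B ` S))"
    proof (intro allI impI)
      fix S assume S: "S \<subseteq> {..<n}"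
      define U where "U = \<Union> (B ` S)"
      have U: "U \<subseteq> {..<n}" by (auto simp: U_def B_def)
      have "(\<Sum>i\<in>S. \<Sum>j<n. p i j) = (\<Sum>i\<in>S. c)" using rows S by (intro sum.cong) auto
      then have "c * card S = (\<Sum>i\<in>S. \<Sum>j<n. p i j)" by simp
      also have "\<dots> = (\<Sum>i\<in>S. \<Sum>j\<in>U. p i j)"
      proof (rule sum.cong[OF refl])
        fix i assume i: "i \<in> S"
        show "(\<Sum>j<n. p i j) = (\<Sum>j\<in>U. p i j)"
        proof (rule sum.mono_neutral_right)
          show "finite {..<n}" by simp
          show "U \<subseteq> {..<n}" by (rule U)
          show "\<forall>j\<in>{..<n} - U. p i j = 0"
          proof
            fix j assume j: "j \<in> {..<n} - U"
            then have "\<not> p i j > 0" using i by (auto simp: U_def B_def)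
            moreover have "p i j \<ge> 0" using pos i S j by auto
            ultimately show "p i j = 0" by simp
          qed
        qed
      qed
      also have "\<dots> = (\<Sum>j\<in>U. \<Sum>i\<in>S. p i j)" by (rule sum.swap)
      also have "\<dots> \<le> (\<Sum>j\<in>U. \<Sum>i<n. p i j)"
      proof (rule sum_mono)
        fix j assume j: "j \<in> U"
        show "(\<Sum>i\<in>S. p i j) \<le> (\<Sum>i<n. p i j)"
          by (rule sum_mono2) (use S U j pos in auto)
      qed
      also have "\<dots> = (\<Sum>j\<in>U. c)" using cols U by (intro sum.cong) auto
      also have "\<dots> = c * card U" by simp
      finally have "c * card S \<le> c * card U" .
      then show "card S \<le> card U" using c0 by simp
    qed
  qed
  then obtain f where f: "inj_on f {..<n}" "\<forall>i\<in>{..<n}. f i \<in> B i" by blast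
  have img: "f ` {..<n} = {..<n}"
    by (rule endo_inj_surj) (use f in \<open>auto simp: B_def\<close>)
  define \<sigma> where "\<sigma> i = (if i < n then f i else i)" for i
  have "bij_betw \<sigma> {..<n} {..<n}"
    unfolding bij_betw_def
  proof
    show "inj_on \<sigma> {..<n}" using f(1) by (auto simp: inj_on_def \<sigma>_def)
    show "\<sigma> ` {..<n} = {..<n}" using img by (auto simp: \<sigma>_def image_def)
  qed
  then have "\<sigma> permutes {..<n}" by (rule bij_imp_permutes) (simp add: \<sigma>_def)
  moreover have "\<forall>i<n. p i (\<sigma> i) > 0" using f(2) by (auto simp: \<sigma>_def B_def)
  ultimately show ?thesis by blast
qed

lemma ds_bound:
  fixes p W :: "nat \<Rightarrow> nat \<Rightarrow> real" and c :: real
  assumes pos: "\<forall>i<n. \<forall>j<n. p i j \<ge> 0" and n: "n \<ge> 1"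
    and rows: "\<forall>i<n. (\<Sum>j<n. p i j) = c" and cols: "\<forall>j<n. (\<Sum>i<n. p i j) = c"
  shows "\<exists>\<sigma>. \<sigma> permutes {..<n} \<and> (\<Sum>i<n. \<Sum>j<n. W i j * p i j) \<le> c * (\<Sum>i<n. W i (\<sigma> i))"
  using pos rows cols
proof (induction "card {(i,j). i < n \<and> j < n \<and> p i j \<noteq> 0}" arbitrary: p c rule: less_induct)
  case less
  have c_nn: "c \<ge> 0"
  proof -
    have "(\<Sum>j<n. p 0 j) \<ge> 0" using less.prems(1) n by (intro sum_nonneg) auto
    then show ?thesis using less.prems(2) n by auto
  qed
  show ?case
  proof (cases "c = 0")
    case True
    have z: "p i j = 0" if "i < n" "j < n" for i j
    proof -
      have "(\<Sum>j<n. p i j) = 0" using less.prems(2) that True by auto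
      then have "\<forall>j\<in>{..<n}. p i j = 0" using less.prems(1) that
        by (subst sum_nonneg_eq_0_iff[symmetric]) auto
      then show ?thesis using that by auto
    qed
    have "(\<Sum>i<n. \<Sum>j<n. W i j * p i j) = 0" using z by simp
    then show ?thesis using True by (intro exI[of _ id]) auto
  next
    case False
    then have cpos: "c > 0" using c_nn by simp
    obtain \<sigma> where \<sigma>: "\<sigma> permutes {..<n}" "\<forall>i<n. p i (\<sigma> i) > 0"
      using ds_exists_perm[OF less.prems(1) cpos less.prems(2,3)] by blast
    have sig_lt: "\<sigma> i < n" if "i < n" for i using permutes_in_image[OF \<sigma>(1)] that by simp
    define \<theta> where "\<theta> = Min ((\<lambda>i. p i (\<sigma> i)) ` {..<n})"
    have "0 \<in> {..<n}" using n by simp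
    then have ne: "{..<n} \<noteq> {}" by blast
    have "\<theta> \<in> (\<lambda>i. p i (\<sigma> i)) ` {..<n}" unfolding \<theta>_def using ne by (intro Min_in) auto
    then obtain i0 where i0: "i0 < n" "\<theta> = p i0 (\<sigma> i0)" by auto
    have th_le: "\<theta> \<le> p i (\<sigma> i)" if "i < n" for i
      unfolding \<theta>_def using that by (intro Min_le) auto
    have th_pos: "\<theta> > 0" using i0 \<sigma>(2) by auto
    define p' where "p' i j = p i j - (if j = \<sigma> i then \<theta> else 0)" for i j
    have pos': "\<forall>i<n. \<forall>j<n. p' i j \<ge> 0" using less.prems(1) th_le by (auto simp: p'_def)
    have rows': "\<forall>i<n. (\<Sum>j<n. p' i j) = c - \<theta>"
    proof (intro allI impI)
      fix i assume i: "i < n"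
      have "(\<Sum>j<n. p' i j) = (\<Sum>j<n. p i j) - (\<Sum>j<n. if j = \<sigma> i then \<theta> else 0)"
        unfolding p'_def by (rule sum_subtractf)
      also have "(\<Sum>j<n. if j = \<sigma> i then \<theta> else 0) = \<theta>" using sig_lt[OF i] by simp
      finally show "(\<Sum>j<n. p' i j) = c - \<theta>" using less.prems(2) i by simp
    qed
    have cols': "\<forall>j<n. (\<Sum>i<n. p' i j) = c - \<theta>"
    proof (intro allI impI)
      fix j assume j: "j < n"
      have "(\<Sum>i<n. p' i j) = (\<Sum>i<n. p i j) - (\<Sum>i<n. if j = \<sigma> i then \<theta> else 0)"
        unfolding p'_def by (rule sum_subtractf)
      also have "(\<Sum>i<n. if j = \<sigma> i then \<theta> else 0) = (\<Sum>i<n. if i = inv \<sigma> j then \<theta> else 0)"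
        using permutes_inv_eq[OF \<sigma>(1)] by (intro sum.cong) metis+
      also have "\<dots> = \<theta>"
        using permutes_in_image[OF permutes_inv[OF \<sigma>(1)], of j] j by simp
      finally show "(\<Sum>i<n. p' i j) = c - \<theta>" using less.prems(3) j by simp
    qed
    have sub: "{(i,j). i < n \<and> j < n \<and> p' i j \<noteq> 0} \<subset> {(i,j). i < n \<and> j < n \<and> p i j \<noteq> 0}"
    proof
      show "{(i,j). i < n \<and> j < n \<and> p' i j \<noteq> 0} \<subseteq> {(i,j). i < n \<and> j < n \<and> p i j \<noteq> 0}"
        using \<sigma>(2) by (auto simp: p'_def split: if_splits)
      have "(i0, \<sigma> i0) \<in> {(i,j). i < n \<and> j < n \<and> p i j \<noteq> 0}" using i0 th_pos sig_lt by auto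
      moreover have "(i0, \<sigma> i0) \<notin> {(i,j). i < n \<and> j < n \<and> p' i j \<noteq> 0}" using i0 by (auto simp: p'_def)
      ultimately show "{(i,j). i < n \<and> j < n \<and> p' i j \<noteq> 0} \<noteq> {(i,j). i < n \<and> j < n \<and> p i j \<noteq> 0}" by blast
    qed
    have fin: "finite {(i,j). i < n \<and> j < n \<and> p i j \<noteq> 0}"
      by (rule finite_subset[of _ "{..<n} \<times> {..<n}"]) auto
    have lt: "card {(i,j). i < n \<and> j < n \<and> p' i j \<noteq> 0} < card {(i,j). i < n \<and> j < n \<and> p i j \<noteq> 0}"
      by (rule psubset_card_mono[OF fin sub])
    obtain \<tau> where \<tau>: "\<tau> permutes {..<n}" "(\<Sum>i<n. \<Sum>j<n. W i j * p' i j) \<le> (c - \<theta>) * (\<Sum>i<n. W i (\<tau> i))"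
      using less.hyps[OF lt pos' rows' cols'] by blast
    have split: "(\<Sum>i<n. \<Sum>j<n. W i j * p i j) = (\<Sum>i<n. \<Sum>j<n. W i j * p' i j) + \<theta> * (\<Sum>i<n. W i (\<sigma> i))"
    proof -
      have "(\<Sum>i<n. \<Sum>j<n. W i j * p i j) = (\<Sum>i<n. (\<Sum>j<n. W i j * p' i j) + \<theta> * W i (\<sigma> i))"
      proof (rule sum.cong[OF refl])
        fix i assume i: "i \<in> {..<n}"
        have "(\<Sum>j<n. W i j * p i j) = (\<Sum>j<n. W i j * p' i j + (if j = \<sigma> i then \<theta> * W i j else 0))"
          by (intro sum.cong) (auto simp: p'_def algebra_simps)
        also have "\<dots> = (\<Sum>j<n. W i j * p' i j) + \<theta> * W i (\<sigma> i)"
          using sig_lt i by (simp add: sum.distrib)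
        finally show "(\<Sum>j<n. W i j * p i j) = (\<Sum>j<n. W i j * p' i j) + \<theta> * W i (\<sigma> i)" .
      qed
      also have "\<dots> = (\<Sum>i<n. \<Sum>j<n. W i j * p' i j) + \<theta> * (\<Sum>i<n. W i (\<sigma> i))"
        by (simp add: sum.distrib sum_distrib_left)
      finally show ?thesis .
    qed
    have cth: "c - \<theta> \<ge> 0"
    proof -
      have "(\<Sum>j<n. p' 0 j) \<ge> 0" using pos' n by (intro sum_nonneg) auto
      then show ?thesis using rows' n by auto
    qed
    show ?thesis
    proof (cases "(\<Sum>i<n. W i (\<tau> i)) \<ge> (\<Sum>i<n. W i (\<sigma> i))")
      case True
      have "\<theta> * (\<Sum>i<n. W i (\<sigma> i)) \<le> \<theta> * (\<Sum>i<n. W i (\<tau> i))"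
        using True th_pos by (intro mult_left_mono) auto
      then have "(\<Sum>i<n. \<Sum>j<n. W i j * p i j) \<le> c * (\<Sum>i<n. W i (\<tau> i))"
        using split \<tau>(2) by (simp add: algebra_simps)
      then show ?thesis using \<tau>(1) by blast
    next
      case False
      have "(c - \<theta>) * (\<Sum>i<n. W i (\<tau> i)) \<le> (c - \<theta>) * (\<Sum>i<n. W i (\<sigma> i))"
        using False cth by (intro mult_left_mono) auto
      then have "(\<Sum>i<n. \<Sum>j<n. W i j * p i j) \<le> c * (\<Sum>i<n. W i (\<sigma> i))"
        using split \<tau>(2) by (simp add: algebra_simps)
      then show ?thesis using \<sigma>(1) by blast
    qed
  qed
qed



locale SAT =
  fixes A :: "'a salg" and tau :: "'a \<Rightarrow> complex"
  assumes sa: "star_algebra A" and lin: "bdd_lin_functional A tau"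
    and trace: "\<And>x y. x \<in> acar A \<Longrightarrow> y \<in> acar A \<Longrightarrow> tau (amul A x y) = tau (amul A y x)"
    and tpos: "\<And>x. x \<in> acar A \<Longrightarrow> Im (tau (amul A (astar A x) x)) = 0 \<and> Re (tau (amul A (astar A x) x)) \<ge> 0"
    and tone: "tau (aone A) = 1"
begin

abbreviation "C \<equiv> acar A"

lemma zero_c[simp]: "azero A \<in> C" using sa unfolding star_algebra_def by auto
lemma one_c[simp]: "aone A \<in> C" using sa unfolding star_algebra_def by auto
lemma add_c[simp]: "x \<in> C \<Longrightarrow> y \<in> C \<Longrightarrow> aadd A x y \<in> C" using sa unfolding star_algebra_def by auto
lemma mul_c[simp]: "x \<in> C \<Longrightarrow> y \<in> C \<Longrightarrow> amul A x y \<in> C" using sa unfolding star_algebra_def by auto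
lemma sc_c[simp]: "x \<in> C \<Longrightarrow> asc A c x \<in> C" using sa unfolding star_algebra_def by auto
lemma star_c[simp]: "x \<in> C \<Longrightarrow> astar A x \<in> C" using sa unfolding star_algebra_def by auto
lemma add_assoc: "x \<in> C \<Longrightarrow> y \<in> C \<Longrightarrow> z \<in> C \<Longrightarrow> aadd A (aadd A x y) z = aadd A x (aadd A y z)"
  using sa unfolding star_algebra_def by auto
lemma add_comm: "x \<in> C \<Longrightarrow> y \<in> C \<Longrightarrow> aadd A x y = aadd A y x" using sa unfolding star_algebra_def by auto
lemma add_zero[simp]: "x \<in> C \<Longrightarrow> aadd A x (azero A) = x" using sa unfolding star_algebra_def by auto
lemma add_neg: "x \<in> C \<Longrightarrow> aadd A x (asc A (-1) x) = azero A" using sa unfolding star_algebra_def by auto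
lemma sc_one[simp]: "x \<in> C \<Longrightarrow> asc A 1 x = x" using sa unfolding star_algebra_def by auto
lemma sc_sc[simp]: "x \<in> C \<Longrightarrow> asc A a (asc A b x) = asc A (a * b) x" using sa unfolding star_algebra_def by auto
lemma sc_addl: "x \<in> C \<Longrightarrow> asc A (a + b) x = aadd A (asc A a x) (asc A b x)" using sa unfolding star_algebra_def by auto
lemma sc_addr: "x \<in> C \<Longrightarrow> y \<in> C \<Longrightarrow> asc A a (aadd A x y) = aadd A (asc A a x) (asc A a y)" using sa unfolding star_algebra_def by auto
lemma mul_assoc: "x \<in> C \<Longrightarrow> y \<in> C \<Longrightarrow> z \<in> C \<Longrightarrow> amul A (amul A x y) z = amul A x (amul A y z)"
  using sa unfolding star_algebra_def by auto
lemma one_mul[simp]: "x \<in> C \<Longrightarrow> amul A (aone A) x = x" using sa unfolding star_algebra_def by auto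
lemma mul_one[simp]: "x \<in> C \<Longrightarrow> amul A x (aone A) = x" using sa unfolding star_algebra_def by auto
lemma distl: "x \<in> C \<Longrightarrow> y \<in> C \<Longrightarrow> z \<in> C \<Longrightarrow> amul A x (aadd A y z) = aadd A (amul A x y) (amul A x z)"
  using sa unfolding star_algebra_def by auto
lemma distr: "x \<in> C \<Longrightarrow> y \<in> C \<Longrightarrow> z \<in> C \<Longrightarrow> amul A (aadd A x y) z = aadd A (amul A x z) (amul A y z)"
  using sa unfolding star_algebra_def by auto
lemma mul_scl[simp]: "x \<in> C \<Longrightarrow> y \<in> C \<Longrightarrow> amul A (asc A a x) y = asc A a (amul A x y)" using sa unfolding star_algebra_def by auto
lemma mul_scr[simp]: "x \<in> C \<Longrightarrow> y \<in> C \<Longrightarrow> amul A x (asc A a y) = asc A a (amul A x y)" using sa unfolding star_algebra_def by auto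
lemma star_star[simp]: "x \<in> C \<Longrightarrow> astar A (astar A x) = x" using sa unfolding star_algebra_def by auto
lemma star_add: "x \<in> C \<Longrightarrow> y \<in> C \<Longrightarrow> astar A (aadd A x y) = aadd A (astar A x) (astar A y)" using sa unfolding star_algebra_def by auto
lemma star_sc[simp]: "x \<in> C \<Longrightarrow> astar A (asc A a x) = asc A (cnj a) (astar A x)" using sa unfolding star_algebra_def by auto
lemma star_mul: "x \<in> C \<Longrightarrow> y \<in> C \<Longrightarrow> astar A (amul A x y) = amul A (astar A y) (astar A x)" using sa unfolding star_algebra_def by auto

lemma zero_add[simp]: "x \<in> C \<Longrightarrow> aadd A (azero A) x = x" using add_comm[of x "azero A"] by simp

lemma add_cancel: assumes "x \<in> C" "y \<in> C" "z \<in> C" "aadd A x y = aadd A x z" shows "y = z"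
proof -
  have "aadd A (asc A (-1) x) (aadd A x y) = aadd A (asc A (-1) x) (aadd A x z)" using assms(4) by simp
  then have "aadd A (aadd A (asc A (-1) x) x) y = aadd A (aadd A (asc A (-1) x) x) z"
    using assms by (simp add: add_assoc)
  moreover have "aadd A (asc A (-1) x) x = azero A" using add_neg[of x] add_comm[of x "asc A (-1) x"] assms by simp
  ultimately show ?thesis using assms by simp
qed

lemma sc_zero[simp]: "x \<in> C \<Longrightarrow> asc A 0 x = azero A"
  using sc_addl[of x 0 0] add_cancel[of "asc A 0 x" "azero A" "asc A 0 x"] by simp

lemma sc_zeror[simp]: "asc A c (azero A) = azero A"
  using sc_addr[of "azero A" "azero A" c] add_cancel[of "asc A c (azero A)" "azero A" "asc A c (azero A)"] by simp

lemma mul_zero[simp]: "x \<in> C \<Longrightarrow> amul A x (azero A) = azero A"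
  using distl[of x "azero A" "azero A"] add_cancel[of "amul A x (azero A)" "azero A" "amul A x (azero A)"] by simp

lemma zero_mul[simp]: "x \<in> C \<Longrightarrow> amul A (azero A) x = azero A"
  using distr[of "azero A" "azero A" x] add_cancel[of "amul A (azero A) x" "azero A" "amul A (azero A) x"] by simp

lemma star_zero[simp]: "astar A (azero A) = azero A"
  using star_sc[of "azero A" 0] by simp

lemma star_one[simp]: "astar A (aone A) = aone A"
  using star_mul[of "astar A (aone A)" "aone A"] by simp

lemma add_swap4: "a \<in> C \<Longrightarrow> b \<in> C \<Longrightarrow> c \<in> C \<Longrightarrow> d \<in> C \<Longrightarrow>
  aadd A (aadd A a b) (aadd A c d) = aadd A (aadd A a c) (aadd A b d)"
  by (metis add_assoc add_c add_comm)

lemma tau_add: "x \<in> C \<Longrightarrow> y \<in> C \<Longrightarrow> tau (aadd A x y) = tau x + tau y" using lin unfolding bdd_lin_functional_def by blast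
lemma tau_sc: "x \<in> C \<Longrightarrow> tau (asc A c x) = c * tau x" using lin unfolding bdd_lin_functional_def by blast
lemma tau_zero[simp]: "tau (azero A) = 0" using tau_sc[of "azero A" 0] by simp

lemma asum_c[simp]: "(\<And>k. k < m \<Longrightarrow> f k \<in> C) \<Longrightarrow> asum A f m \<in> C"
  by (induction m) auto

lemma asum_cong: "(\<And>k. k < m \<Longrightarrow> f k = g k) \<Longrightarrow> asum A f m = asum A g m"
  by (induction m) auto

lemma asum_zeros: "(\<And>k. k < m \<Longrightarrow> f k = azero A) \<Longrightarrow> asum A f m = azero A"
  by (induction m) auto

lemma asum_delta: "k0 < m \<Longrightarrow> f k0 \<in> C \<Longrightarrow> (\<And>k. k < m \<Longrightarrow> k \<noteq> k0 \<Longrightarrow> f k = azero A) \<Longrightarrow> asum A f m = f k0"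
proof (induction m)
  case 0 then show ?case by simp
next
  case (Suc m)
  show ?case
  proof (cases "k0 = m")
    case True
    then have "asum A f m = azero A" using Suc.prems by (intro asum_zeros) auto
    then show ?thesis using True Suc.prems by simp
  next
    case False
    then have "asum A f m = f k0" using Suc by auto
    moreover have "f m = azero A" using Suc.prems False by auto
    ultimately show ?thesis using Suc.prems by simp
  qed
qed

lemma asum_add: "(\<And>k. k < m \<Longrightarrow> f k \<in> C) \<Longrightarrow> (\<And>k. k < m \<Longrightarrow> g k \<in> C) \<Longrightarrow>
  asum A (\<lambda>k. aadd A (f k) (g k)) m = aadd A (asum A f m) (asum A g m)"
  by (induction m) (auto simp: add_swap4)

lemma asum_sc: "(\<And>k. k < m \<Longrightarrow> f k \<in> C) \<Longrightarrow> asc A c (asum A f m) = asum A (\<lambda>k. asc A c (f k)) m"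
  by (induction m) (auto simp: sc_addr)

lemma asum_mull: "x \<in> C \<Longrightarrow> (\<And>k. k < m \<Longrightarrow> f k \<in> C) \<Longrightarrow> amul A x (asum A f m) = asum A (\<lambda>k. amul A x (f k)) m"
  by (induction m) (auto simp: distl)

lemma asum_mulr: "x \<in> C \<Longrightarrow> (\<And>k. k < m \<Longrightarrow> f k \<in> C) \<Longrightarrow> amul A (asum A f m) x = asum A (\<lambda>k. amul A (f k) x) m"
  by (induction m) (auto simp: distr)

lemma asum_star: "(\<And>k. k < m \<Longrightarrow> f k \<in> C) \<Longrightarrow> astar A (asum A f m) = asum A (\<lambda>k. astar A (f k)) m"
  by (induction m) (auto simp: star_add)

lemma tau_asum: "(\<And>k. k < m \<Longrightarrow> f k \<in> C) \<Longrightarrow> tau (asum A f m) = (\<Sum>k<m. tau (f k))"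
  by (induction m) (auto simp: tau_add)

end



context SAT
begin

lemma unit_c: "u \<in> munitaries A n \<Longrightarrow> i < n \<Longrightarrow> j < n \<Longrightarrow> u i j \<in> C"
  unfolding munitaries_def mats_def by (auto dest: spec[of _ i] )

lemma mone_eq: "i < n \<Longrightarrow> j < n \<Longrightarrow> mone A n i j = (if i = j then aone A else azero A)"
  by (simp add: mone_def)

lemma U1: assumes u: "u \<in> munitaries A n" and ij: "i < n" "j < n"
  shows "asum A (\<lambda>k. amul A (astar A (u k i)) (u k j)) n = mone A n i j"
proof -
  have "mmul A n (madj A n u) u i j = mone A n i j" using u unfolding munitaries_def by simp
  then have "asum A (\<lambda>k. amul A (madj A n u i k) (u k j)) n = mone A n i j" using ij unfolding mmul_def by simp
  moreover have "asum A (\<lambda>k. amul A (madj A n u i k) (u k j)) n = asum A (\<lambda>k. amul A (astar A (u k i)) (u k j)) n"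
    using ij by (intro asum_cong) (simp add: madj_def)
  ultimately show ?thesis by simp
qed

lemma U2: assumes u: "u \<in> munitaries A n" and ij: "i < n" "j < n"
  shows "asum A (\<lambda>k. amul A (u i k) (astar A (u j k))) n = mone A n i j"
proof -
  have "mmul A n u (madj A n u) i j = mone A n i j" using u unfolding munitaries_def by simp
  then have "asum A (\<lambda>k. amul A (u i k) (madj A n u k j)) n = mone A n i j" using ij unfolding mmul_def by simp
  moreover have "asum A (\<lambda>k. amul A (u i k) (madj A n u k j)) n = asum A (\<lambda>k. amul A (u i k) (astar A (u j k))) n"
    using ij by (intro asum_cong) (simp add: madj_def)
  ultimately show ?thesis by simp
qed

lemma iso:
  assumes u: "u \<in> munitaries A n" and j: "j < n"
    and cc: "\<And>k. k < n \<Longrightarrow> c k \<in> C"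
  shows "(\<Sum>i<n. tau (amul A (astar A (asum A (\<lambda>k. amul A (astar A (u k i)) (c k)) n))
                            (asum A (\<lambda>k. amul A (astar A (u k i)) (c k)) n)))
       = (\<Sum>k<n. tau (amul A (astar A (c k)) (c k)))"
proof -
  have uc: "\<And>i k. i < n \<Longrightarrow> k < n \<Longrightarrow> u i k \<in> C" using unit_c[OF u] by blast
  have step1: "tau (amul A (astar A (asum A (\<lambda>k. amul A (astar A (u k i)) (c k)) n))
                            (asum A (\<lambda>k. amul A (astar A (u k i)) (c k)) n))
     = (\<Sum>k<n. \<Sum>l<n. tau (amul A (astar A (c k)) (amul A (amul A (u k i) (astar A (u l i))) (c l))))"
    if i: "i < n" for i
  proof -
    let ?X = "\<lambda>k. amul A (astar A (u k i)) (c k)"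
    have Xc: "\<And>k. k < n \<Longrightarrow> ?X k \<in> C" using uc cc i by simp
    have "astar A (asum A ?X n) = asum A (\<lambda>k. astar A (?X k)) n" by (rule asum_star[OF Xc])
    also have "\<dots> = asum A (\<lambda>k. amul A (astar A (c k)) (u k i)) n"
      using uc cc i by (intro asum_cong) (simp add: star_mul)
    finally have e1: "astar A (asum A ?X n) = asum A (\<lambda>k. amul A (astar A (c k)) (u k i)) n" .
    have "amul A (asum A (\<lambda>k. amul A (astar A (c k)) (u k i)) n) (asum A ?X n)
       = asum A (\<lambda>k. amul A (amul A (astar A (c k)) (u k i)) (asum A ?X n)) n"
      using uc cc i Xc by (intro asum_mulr) auto
    also have "\<dots> = asum A (\<lambda>k. asum A (\<lambda>l. amul A (amul A (astar A (c k)) (u k i)) (?X l)) n) n"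
      using uc cc i Xc by (intro asum_cong asum_mull) auto
    finally have e2: "amul A (asum A (\<lambda>k. amul A (astar A (c k)) (u k i)) n) (asum A ?X n)
       = asum A (\<lambda>k. asum A (\<lambda>l. amul A (amul A (astar A (c k)) (u k i)) (?X l)) n) n" .
    have "tau (amul A (astar A (asum A ?X n)) (asum A ?X n))
       = (\<Sum>k<n. tau (asum A (\<lambda>l. amul A (amul A (astar A (c k)) (u k i)) (?X l)) n))"
      unfolding e1 e2 using uc cc i by (intro tau_asum asum_c) auto
    also have "\<dots> = (\<Sum>k<n. \<Sum>l<n. tau (amul A (amul A (astar A (c k)) (u k i)) (?X l)))"
      using uc cc i by (intro sum.cong refl tau_asum) auto
    also have "\<dots> = (\<Sum>k<n. \<Sum>l<n. tau (amul A (astar A (c k)) (amul A (amul A (u k i) (astar A (u l i))) (c l))))"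
      using uc cc i by (intro sum.cong refl) (simp add: mul_assoc)
    finally show ?thesis .
  qed
  have "(\<Sum>i<n. tau (amul A (astar A (asum A (\<lambda>k. amul A (astar A (u k i)) (c k)) n))
                            (asum A (\<lambda>k. amul A (astar A (u k i)) (c k)) n)))
      = (\<Sum>i<n. \<Sum>k<n. \<Sum>l<n. tau (amul A (astar A (c k)) (amul A (amul A (u k i) (astar A (u l i))) (c l))))"
    using step1 by (intro sum.cong) auto
  also have "\<dots> = (\<Sum>k<n. \<Sum>i<n. \<Sum>l<n. tau (amul A (astar A (c k)) (amul A (amul A (u k i) (astar A (u l i))) (c l))))"
    by (rule sum.swap)
  also have "\<dots> = (\<Sum>k<n. \<Sum>l<n. \<Sum>i<n. tau (amul A (astar A (c k)) (amul A (amul A (u k i) (astar A (u l i))) (c l))))"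
    by (intro sum.cong refl sum.swap)
  also have "\<dots> = (\<Sum>k<n. \<Sum>l<n. tau (amul A (astar A (c k)) (amul A (mone A n k l) (c l))))"
  proof (intro sum.cong refl)
    fix k l assume kl: "k \<in> {..<n}" "l \<in> {..<n}"
    let ?Y = "\<lambda>i. amul A (u k i) (astar A (u l i))"
    have Yc: "\<And>i. i < n \<Longrightarrow> ?Y i \<in> C" using uc kl by simp
    have "(\<Sum>i<n. tau (amul A (astar A (c k)) (amul A (?Y i) (c l))))
        = tau (asum A (\<lambda>i. amul A (astar A (c k)) (amul A (?Y i) (c l))) n)"
      using Yc cc kl by (intro tau_asum[symmetric]) auto
    also have "asum A (\<lambda>i. amul A (astar A (c k)) (amul A (?Y i) (c l))) n
        = amul A (astar A (c k)) (asum A (\<lambda>i. amul A (?Y i) (c l)) n)"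
      using Yc cc kl by (intro asum_mull[symmetric]) auto
    also have "asum A (\<lambda>i. amul A (?Y i) (c l)) n = amul A (asum A ?Y n) (c l)"
      using Yc cc kl by (intro asum_mulr[symmetric]) auto
    also have "asum A ?Y n = mone A n k l" using U2[OF u] kl by simp
    finally show "(\<Sum>i<n. tau (amul A (astar A (c k)) (amul A (?Y i) (c l))))
        = tau (amul A (astar A (c k)) (amul A (mone A n k l) (c l)))" .
  qed
  also have "\<dots> = (\<Sum>k<n. \<Sum>l<n. if l = k then tau (amul A (astar A (c k)) (c k)) else 0)"
    using cc by (intro sum.cong refl) (auto simp: mone_eq)
  also have "\<dots> = (\<Sum>k<n. tau (amul A (astar A (c k)) (c k)))" by simp
  finally show ?thesis .
qed

lemma au_eq: assumes u: "u \<in> munitaries A n" and kj: "k < n" "j < n"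
  shows "mmul A n (diag_tensor_one A n lam) u k j = asc A (lam k) (u k j)"
proof -
  have uc: "\<And>i k. i < n \<Longrightarrow> k < n \<Longrightarrow> u i k \<in> C" using unit_c[OF u] by blast
  have "mmul A n (diag_tensor_one A n lam) u k j = asum A (\<lambda>m. amul A (diag_tensor_one A n lam k m) (u m j)) n"
    using kj by (simp add: mmul_def)
  also have "\<dots> = amul A (diag_tensor_one A n lam k k) (u k j)"
    using kj uc by (intro asum_delta) (auto simp: diag_tensor_one_def)
  also have "\<dots> = asc A (lam k) (u k j)" using kj uc by (simp add: diag_tensor_one_def)
  finally show ?thesis .
qed

lemma b_eq: assumes u: "u \<in> munitaries A n" and ij: "i < n" "j < n"
  shows "msub A n (diag_tensor_one A n lam) (mmul A n (madj A n u) (mmul A n (diag_tensor_one A n lam) u)) i j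
    = asum A (\<lambda>k. amul A (astar A (u k i)) (asc A (lam j - lam k) (u k j))) n"
proof -
  have uc: "\<And>i k. i < n \<Longrightarrow> k < n \<Longrightarrow> u i k \<in> C" using unit_c[OF u] by blast
  let ?Z = "\<lambda>k. amul A (astar A (u k i)) (u k j)"
  have Zc: "\<And>k. k < n \<Longrightarrow> ?Z k \<in> C" using uc ij by simp
  define W where "W = asum A (\<lambda>k. asc A (lam k) (?Z k)) n"
  have Wc: "W \<in> C" unfolding W_def using Zc by simp
  have W: "mmul A n (madj A n u) (mmul A n (diag_tensor_one A n lam) u) i j = W"
  proof -
    have "mmul A n (madj A n u) (mmul A n (diag_tensor_one A n lam) u) i j
       = asum A (\<lambda>k. amul A (madj A n u i k) (mmul A n (diag_tensor_one A n lam) u k j)) n"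
      using ij by (simp add: mmul_def)
    also have "\<dots> = W" unfolding W_def
      using ij uc by (intro asum_cong) (simp add: madj_def au_eq[OF u])
    finally show ?thesis .
  qed
  have a_eq: "diag_tensor_one A n lam i j = asc A (lam j) (mone A n i j)"
    using ij by (auto simp: diag_tensor_one_def mone_eq)
  have "asum A (\<lambda>k. amul A (astar A (u k i)) (asc A (lam j - lam k) (u k j))) n
      = asum A (\<lambda>k. aadd A (asc A (lam j) (?Z k)) (asc A (-1) (asc A (lam k) (?Z k)))) n"
  proof (rule asum_cong)
    fix k assume k: "k < n"
    have "lam j - lam k = lam j + (-1) * lam k" by simp
    then have "asc A (lam j - lam k) (?Z k) = aadd A (asc A (lam j) (?Z k)) (asc A ((-1) * lam k) (?Z k))"
      using sc_addl[OF Zc[OF k], of "lam j" "(-1) * lam k"] by simp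
    then show "amul A (astar A (u k i)) (asc A (lam j - lam k) (u k j))
      = aadd A (asc A (lam j) (?Z k)) (asc A (-1) (asc A (lam k) (?Z k)))"
      using uc k ij Zc[OF k] by simp
  qed
  also have "\<dots> = aadd A (asum A (\<lambda>k. asc A (lam j) (?Z k)) n) (asum A (\<lambda>k. asc A (-1) (asc A (lam k) (?Z k))) n)"
    using Zc by (intro asum_add) auto
  also have "asum A (\<lambda>k. asc A (lam j) (?Z k)) n = asc A (lam j) (asum A ?Z n)"
    using Zc by (intro asum_sc[symmetric]) auto
  also have "asum A ?Z n = mone A n i j" using U1[OF u ij] .
  also have "asum A (\<lambda>k. asc A (-1) (asc A (lam k) (?Z k))) n = asc A (-1) W"
    unfolding W_def using Zc by (intro asum_sc[symmetric]) auto
  finally have "asum A (\<lambda>k. amul A (astar A (u k i)) (asc A (lam j - lam k) (u k j))) n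
      = aadd A (diag_tensor_one A n lam i j) (asc A (-1) W)" using a_eq by simp
  then show ?thesis using ij W by (simp add: msub_def asub_def)
qed

lemma formula: assumes u: "u \<in> munitaries A n"
  shows "comm_dist A tau n (diag_tensor_one A n lam) u
    = sqrt ((\<Sum>k<n. \<Sum>j<n. (cmod (lam j - lam k))\<^sup>2 * Re (tau (amul A (astar A (u k j)) (u k j)))) / real n)"
proof -
  have uc: "\<And>i k. i < n \<Longrightarrow> k < n \<Longrightarrow> u i k \<in> C" using unit_c[OF u] by blast
  define b where "b = msub A n (diag_tensor_one A n lam) (mmul A n (madj A n u) (mmul A n (diag_tensor_one A n lam) u))"
  define c where "c j k = asc A (lam j - lam k) (u k j)" for j k
  have cc: "\<And>j k. j < n \<Longrightarrow> k < n \<Longrightarrow> c j k \<in> C" using uc by (simp add: c_def)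
  have bij: "b i j = asum A (\<lambda>k. amul A (astar A (u k i)) (c j k)) n" if "i < n" "j < n" for i j
    unfolding b_def c_def using b_eq[OF u that] .
  have diag: "tau (mmul A n (madj A n b) b j j)
     = (\<Sum>k<n. of_real ((cmod (lam j - lam k))\<^sup>2 * Re (tau (amul A (astar A (u k j)) (u k j)))))"
    if j: "j < n" for j
  proof -
    have bc: "\<And>i. i < n \<Longrightarrow> b i j \<in> C" using bij j uc cc by simp
    have "mmul A n (madj A n b) b j j = asum A (\<lambda>i. amul A (astar A (b i j)) (b i j)) n"
      using j by (simp add: mmul_def) (intro asum_cong, simp add: madj_def)
    then have "tau (mmul A n (madj A n b) b j j) = (\<Sum>i<n. tau (amul A (astar A (b i j)) (b i j)))"
      using bc by (simp add: tau_asum)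
    also have "\<dots> = (\<Sum>i<n. tau (amul A (astar A (asum A (\<lambda>k. amul A (astar A (u k i)) (c j k)) n))
                            (asum A (\<lambda>k. amul A (astar A (u k i)) (c j k)) n)))"
      using bij j by (intro sum.cong) auto
    also have "\<dots> = (\<Sum>k<n. tau (amul A (astar A (c j k)) (c j k)))"
      by (rule iso[OF u j]) (use cc j in auto)
    also have "\<dots> = (\<Sum>k<n. of_real ((cmod (lam j - lam k))\<^sup>2 * Re (tau (amul A (astar A (u k j)) (u k j)))))"
    proof (intro sum.cong refl)
      fix k assume k: "k \<in> {..<n}"
      let ?t = "tau (amul A (astar A (u k j)) (u k j))"
      have tr: "?t = of_real (Re ?t)" using tpos[of "u k j"] uc k j by (simp add: complex_eq_iff)
      have "tau (amul A (astar A (c j k)) (c j k)) = (cnj (lam j - lam k) * (lam j - lam k)) * ?t"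
        using uc k j by (simp add: c_def tau_sc)
      also have "cnj (lam j - lam k) * (lam j - lam k) = of_real ((cmod (lam j - lam k))\<^sup>2)"
        by (metis complex_norm_square mult.commute)
      finally show "tau (amul A (astar A (c j k)) (c j k)) = of_real ((cmod (lam j - lam k))\<^sup>2 * Re ?t)"
        using tr by (metis of_real_mult)
    qed
    finally show ?thesis .
  qed
  have "Re (mtau tau n (mmul A n (madj A n b) b))
      = (\<Sum>j<n. \<Sum>k<n. (cmod (lam j - lam k))\<^sup>2 * Re (tau (amul A (astar A (u k j)) (u k j)))) / real n"
  proof -
    have "(\<Sum>i<n. tau (mmul A n (madj A n b) b i i))
        = of_real (\<Sum>j<n. \<Sum>k<n. (cmod (lam j - lam k))\<^sup>2 * Re (tau (amul A (astar A (u k j)) (u k j))))"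
      using diag by (simp add: of_real_sum)
    then show ?thesis unfolding mtau_def by simp
  qed
  also have "(\<Sum>j<n. \<Sum>k<n. (cmod (lam j - lam k))\<^sup>2 * Re (tau (amul A (astar A (u k j)) (u k j))))
     = (\<Sum>k<n. \<Sum>j<n. (cmod (lam j - lam k))\<^sup>2 * Re (tau (amul A (astar A (u k j)) (u k j))))"
    by (rule sum.swap)
  finally show ?thesis unfolding comm_dist_def mnorm2_def b_def by simp
qed

end


context SAT
begin

lemma p_props: assumes u: "u \<in> munitaries A n"
  shows "\<forall>k<n. \<forall>j<n. Re (tau (amul A (astar A (u k j)) (u k j))) \<ge> 0"
    and "\<forall>k<n. (\<Sum>j<n. Re (tau (amul A (astar A (u k j)) (u k j)))) = 1"
    and "\<forall>j<n. (\<Sum>k<n. Re (tau (amul A (astar A (u k j)) (u k j)))) = 1"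
proof -
  have uc: "\<And>i k. i < n \<Longrightarrow> k < n \<Longrightarrow> u i k \<in> C" using unit_c[OF u] by blast
  show "\<forall>k<n. \<forall>j<n. Re (tau (amul A (astar A (u k j)) (u k j))) \<ge> 0" using tpos uc by blast
  show "\<forall>k<n. (\<Sum>j<n. Re (tau (amul A (astar A (u k j)) (u k j)))) = 1"
  proof (intro allI impI)
    fix k assume k: "k < n"
    have "(\<Sum>j<n. tau (amul A (astar A (u k j)) (u k j))) = (\<Sum>j<n. tau (amul A (u k j) (astar A (u k j))))"
      using uc k trace by (intro sum.cong) auto
    also have "\<dots> = tau (asum A (\<lambda>j. amul A (u k j) (astar A (u k j))) n)"
      using uc k by (intro tau_asum[symmetric]) auto
    also have "\<dots> = 1" using U2[OF u k k] by (simp add: mone_eq k tone)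
    finally show "(\<Sum>j<n. Re (tau (amul A (astar A (u k j)) (u k j)))) = 1"
      by (metis Re_sum one_complex.sel)
  qed
  show "\<forall>j<n. (\<Sum>k<n. Re (tau (amul A (astar A (u k j)) (u k j)))) = 1"
  proof (intro allI impI)
    fix j assume j: "j < n"
    have "(\<Sum>k<n. tau (amul A (astar A (u k j)) (u k j))) = tau (asum A (\<lambda>k. amul A (astar A (u k j)) (u k j)) n)"
      using uc j by (intro tau_asum[symmetric]) auto
    also have "\<dots> = 1" using U1[OF u j j] by (simp add: mone_eq j tone)
    finally show "(\<Sum>k<n. Re (tau (amul A (astar A (u k j)) (u k j)))) = 1"
      by (metis Re_sum one_complex.sel)
  qed
qed

lemma perm_unitary: assumes s: "\<sigma> permutes {..<n}"
  shows "perm_tensor_one A n \<sigma> \<in> munitaries A n"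
proof -
  let ?P = "perm_tensor_one A n \<sigma>"
  have sl: "\<And>i. i < n \<Longrightarrow> \<sigma> i < n" using permutes_in_image[OF s] by simp
  have isl: "\<And>i. i < n \<Longrightarrow> inv \<sigma> i < n" using permutes_in_image[OF permutes_inv[OF s]] by simp
  have sinv: "\<And>i. \<sigma> (inv \<sigma> i) = i" using permutes_inverses[OF s] by simp
  have invs: "\<And>i. inv \<sigma> (\<sigma> i) = i" using permutes_inverses[OF s] by simp
  have Pc: "\<And>i j. ?P i j \<in> C" by (simp add: perm_tensor_one_def)
  have mats: "?P \<in> mats A n" by (simp add: mats_def perm_tensor_one_def)
  have e1: "mmul A n (madj A n ?P) ?P = mone A n"
  proof (intro ext)
    fix i j
    show "mmul A n (madj A n ?P) ?P i j = mone A n i j"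
    proof (cases "i < n \<and> j < n")
      case False then show ?thesis by (auto simp: mmul_def mone_def)
    next
      case True
      have "mmul A n (madj A n ?P) ?P i j = asum A (\<lambda>k. amul A (astar A (?P k i)) (?P k j)) n"
        using True by (simp add: mmul_def) (intro asum_cong, simp add: madj_def)
      also have "\<dots> = amul A (astar A (?P (inv \<sigma> i) i)) (?P (inv \<sigma> i) j)"
        using True isl sinv invs Pc by (intro asum_delta) (auto simp: perm_tensor_one_def)
      also have "\<dots> = mone A n i j" using True isl sinv by (auto simp: perm_tensor_one_def mone_def)
      finally show ?thesis .
    qed
  qed
  have e2: "mmul A n ?P (madj A n ?P) = mone A n"
  proof (intro ext)
    fix i j
    show "mmul A n ?P (madj A n ?P) i j = mone A n i j"
    proof (cases "i < n \<and> j < n")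
      case False then show ?thesis by (auto simp: mmul_def mone_def)
    next
      case True
      have "mmul A n ?P (madj A n ?P) i j = asum A (\<lambda>k. amul A (?P i k) (astar A (?P j k))) n"
        using True by (simp add: mmul_def) (intro asum_cong, simp add: madj_def)
      also have "\<dots> = amul A (?P i (\<sigma> i)) (astar A (?P j (\<sigma> i)))"
        using True sl Pc by (intro asum_delta) (auto simp: perm_tensor_one_def)
      also have "\<dots> = mone A n i j"
        using True sl permutes_inj[OF s] by (auto simp: perm_tensor_one_def mone_def inj_def)
      finally show ?thesis .
    qed
  qed
  show ?thesis using mats e1 e2 by (simp add: munitaries_def)
qed

lemma perm_value: assumes s: "\<sigma> permutes {..<n}"
  shows "comm_dist A tau n (diag_tensor_one A n lam) (perm_tensor_one A n \<sigma>)
     = sqrt ((\<Sum>k<n. (cmod (lam (\<sigma> k) - lam k))\<^sup>2) / real n)"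
proof -
  have sl: "\<And>i. i < n \<Longrightarrow> \<sigma> i < n" using permutes_in_image[OF s] by simp
  have "(\<Sum>k<n. \<Sum>j<n. (cmod (lam j - lam k))\<^sup>2 * Re (tau (amul A (astar A (perm_tensor_one A n \<sigma> k j)) (perm_tensor_one A n \<sigma> k j))))
     = (\<Sum>k<n. \<Sum>j<n. if j = \<sigma> k then (cmod (lam j - lam k))\<^sup>2 else 0)"
    by (intro sum.cong refl) (auto simp: perm_tensor_one_def tone)
  also have "\<dots> = (\<Sum>k<n. (cmod (lam (\<sigma> k) - lam k))\<^sup>2)"
    using sl by (intro sum.cong refl) simp
  finally show ?thesis using formula[OF perm_unitary[OF s]] by simp
qed

end


theorem proposition5p5:
  fixes N :: "'a salg" and tauN :: "'a \<Rightarrow> complex" and n :: nat and lam :: "nat \<Rightarrow> complex"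
    and a :: "nat \<Rightarrow> nat \<Rightarrow> 'a"
  assumes "finite_factor_with_trace N tauN"
    and "n \<ge> 1"
    and "a = diag_tensor_one N n lam"
  shows "(SUP u \<in> munitaries N n. comm_dist N tauN n a u)
       = Max ((\<lambda>\<sigma>. comm_dist N tauN n a (perm_tensor_one N n \<sigma>)) ` {\<sigma>. \<sigma> permutes {..<n}})"
proof -
  have fft: "factor N" "faithful_normal_tracial_state N tauN"
    using assms(1) unfolding finite_factor_with_trace_def by auto
  interpret SAT N tauN
  proof
    show "star_algebra N" using fft(1) unfolding factor_def wstar_algebra_def cstar_algebra_def by blast
    show "bdd_lin_functional N tauN" using fft(2) unfolding faithful_normal_tracial_state_def by blast
    show "\<And>x y. x \<in> acar N \<Longrightarrow> y \<in> acar N \<Longrightarrow> tauN (amul N x y) = tauN (amul N y x)"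
      using fft(2) unfolding faithful_normal_tracial_state_def by blast
    show "\<And>x. x \<in> acar N \<Longrightarrow> Im (tauN (amul N (astar N x) x)) = 0 \<and> 0 \<le> Re (tauN (amul N (astar N x) x))"
      using fft(2) unfolding faithful_normal_tracial_state_def by blast
    show "tauN (aone N) = 1" using fft(2) unfolding faithful_normal_tracial_state_def by blast
  qed
  define g where "g u = comm_dist N tauN n a u" for u
  define V where "V = (\<lambda>\<sigma>. g (perm_tensor_one N n \<sigma>)) ` {\<sigma>. \<sigma> permutes {..<n}}"
  have finV: "finite V" unfolding V_def using finite_permutations[of "{..<n}"] by simp
  have neV: "V \<noteq> {}" unfolding V_def using permutes_id[of "{..<n}"] by blast
  have bound: "g u \<le> Max V" if u: "u \<in> munitaries N n" for u
  proof -
    let ?W = "\<lambda>k j. (cmod (lam j - lam k))\<^sup>2"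
    let ?p = "\<lambda>k j. Re (tauN (amul N (astar N (u k j)) (u k j)))"
    obtain \<sigma> where \<sigma>: "\<sigma> permutes {..<n}" "(\<Sum>i<n. \<Sum>j<n. ?W i j * ?p i j) \<le> 1 * (\<Sum>i<n. ?W i (\<sigma> i))"
      using ds_bound[OF p_props(1)[OF u] assms(2) p_props(2)[OF u] p_props(3)[OF u], of ?W] by blast
    have "g u = sqrt ((\<Sum>i<n. \<Sum>j<n. ?W i j * ?p i j) / real n)"
      unfolding g_def assms(3) by (rule formula[OF u])
    also have "\<dots> \<le> sqrt ((\<Sum>i<n. ?W i (\<sigma> i)) / real n)"
      using \<sigma>(2) assms(2) by (intro real_sqrt_le_mono divide_right_mono) auto
    also have "\<dots> = g (perm_tensor_one N n \<sigma>)"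
      unfolding g_def assms(3) by (rule perm_value[OF \<sigma>(1), symmetric])
    also have "\<dots> \<le> Max V" using finV \<sigma>(1) unfolding V_def by (intro Max_ge) auto
    finally show ?thesis .
  qed
  have "Max V \<in> V" using finV neV by (rule Max_in)
  then obtain \<sigma> where \<sigma>: "\<sigma> permutes {..<n}" "Max V = g (perm_tensor_one N n \<sigma>)" unfolding V_def by auto
  have "Max V \<in> g ` munitaries N n" using \<sigma> perm_unitary[OF \<sigma>(1)] by auto
  then have "Sup (g ` munitaries N n) = Max V"
    by (rule cSup_eq_maximum) (use bound in auto)
  then show ?thesis unfolding g_def V_def by simp
qed


end
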